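(* Let $\|\cdot\|_\alpha$ be a submultiplicative norm from a dimension-invariant family, and let $A$ be an $n\times n$ matrix with a blocking of $n_t$ blocks that is strictly block diagonally dominant by columns, i.e. each $A_{j,j}$ is nonsingular and $\sum_{i\ne j}\|A_{i,j}\|_\alpha<\|A_{j,j}^{-1}\|_\alpha^{-1}$ for all $1\le j\le n_t$ (or strictly block diagonally dominant by rows, i.e. $\sum_{j\ne i}\|A_{i,j}\|_\alpha<\|A_{i,i}^{-1}\|_\alpha^{-1}$ for all $i$). Then $A$ is block strongly nonsingular and the block-sum growth factor satisfies $\rho_{\Sigma\alpha}=\max_{1\le k\le n_t}\|A^{(k)}\|_{\Sigma\alpha}/\|A\|_{\Sigma\alpha}=1$.
   Context: A dimension-invariant family of matrix norms: for every matrix $B$ and every contiguous block partition, $\max_{i,j}\|B_{i,j}\|\le\|B\|\le\sum_{i,j}\|B_{i,j}\|$. Blocking: a strictly increasing list $[1=\mathcal{I}_1<\dots<\mathcal{I}_{n_t+1}=n+1]$ defining blocks $A_{i,j}$. Block strongly nonsingular: all $A_{1:k,1:k}$ nonsingular. Block Schur complements: $A^{(1)}=A$, $A^{(k+1)}=A^{(k)}_{k+1:n_t,k+1:n_t}-A^{(k)}_{k+1:n_t,k}(A^{(k)}_{k,k})^{-1}A^{(k)}_{k,k+1:n_t}$ (blocks indexed $k+1,\dots,n_t$). Block-sum norm: $\|B\|_{\Sigma\alpha}=\sum_{i,j}\|B_{ij}\|_\alpha$ over the blocks of $B$. *)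

theory Defs
  imports Complex_Main "Jordan_Normal_Form.Matrix"
begin

definition mat_norm_family :: "('a::real_normed_field mat \<Rightarrow> real) \<Rightarrow> bool" where
  "mat_norm_family N \<longleftrightarrow>
     (\<forall>B. 0 \<le> N B) \<and>
     (\<forall>B. N B = 0 \<longleftrightarrow> B = 0\<^sub>m (dim_row B) (dim_col B)) \<and>
     (\<forall>c B. N (c \<cdot>\<^sub>m B) = norm c * N B) \<and>
     (\<forall>B C. dim_row B = dim_row C \<longrightarrow> dim_col B = dim_col C \<longrightarrow> N (B + C) \<le> N B + N C)"

definition submultiplicative :: "('a::real_normed_field mat \<Rightarrow> real) \<Rightarrow> bool" where
  "submultiplicative N \<longleftrightarrow> (\<forall>X Y. dim_col X = dim_row Y \<longrightarrow> N (X * Y) \<le> N X * N Y)"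

text \<open>A contiguous partition of {0..<m} given by 0 = P!0 < P!1 < ... < last P = m
  (0-based version of the paper's 1 = I_1 < ... < I_{n_t+1} = m+1).\<close>
definition partition_of :: "nat list \<Rightarrow> nat \<Rightarrow> bool" where
  "partition_of P m \<longleftrightarrow> 2 \<le> length P \<and> sorted_wrt (<) P \<and> hd P = 0 \<and> last P = m"

definition nblocks :: "nat list \<Rightarrow> nat" where
  "nblocks P = length P - 1"

definition blk :: "'a mat \<Rightarrow> nat list \<Rightarrow> nat list \<Rightarrow> nat \<Rightarrow> nat \<Rightarrow> 'a mat" where
  "blk B R C i j = mat (R ! Suc i - R ! i) (C ! Suc j - C ! j) (\<lambda>(r, c). B $$ (R ! i + r, C ! j + c))"

definition dimension_invariant :: "('a::real_normed_field mat \<Rightarrow> real) \<Rightarrow> bool" where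
  "dimension_invariant N \<longleftrightarrow>
     (\<forall>B R C. partition_of R (dim_row B) \<longrightarrow> partition_of C (dim_col B) \<longrightarrow>
        (\<forall>i < nblocks R. \<forall>j < nblocks C. N (blk B R C i j) \<le> N B) \<and>
        N B \<le> (\<Sum>i < nblocks R. \<Sum>j < nblocks C. N (blk B R C i j)))"

definition mat_inv :: "'a::field mat \<Rightarrow> 'a mat" where
  "mat_inv A = (SOME B. inverts_mat A B \<and> inverts_mat B A)"

definition lead :: "'a mat \<Rightarrow> nat \<Rightarrow> 'a mat" where
  "lead A m = mat m m (\<lambda>(r, c). A $$ (r, c))"

definition block_strongly_nonsingular :: "'a::field mat \<Rightarrow> nat list \<Rightarrow> bool" where
  "block_strongly_nonsingular A I \<longleftrightarrow> (\<forall>k \<in> {1..nblocks I}. invertible_mat (lead A (I ! k)))"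

text \<open>schur A I k is the paper's A^(k+1): schur A I 0 = A, and each step eliminates
  the leading block (of size I!(k+1) - I!k) of the previous Schur complement.\<close>
fun schur :: "'a::field mat \<Rightarrow> nat list \<Rightarrow> nat \<Rightarrow> 'a mat" where
  "schur A I 0 = A"
| "schur A I (Suc k) =
     (let S = schur A I k; d = I ! Suc k - I ! k in
      case split_block S d d of (S11, S12, S21, S22) \<Rightarrow> S22 - S21 * mat_inv S11 * S12)"

text \<open>The blocking inherited by schur A I k (block indices k+1..n_t of the paper).\<close>
definition shift_blocking :: "nat list \<Rightarrow> nat \<Rightarrow> nat list" where
  "shift_blocking I k = map (\<lambda>x. x - I ! k) (drop k I)"

definition block_sum_norm :: "('a mat \<Rightarrow> real) \<Rightarrow> 'a mat \<Rightarrow> nat list \<Rightarrow> real" where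
  "block_sum_norm N B P = (\<Sum>i < nblocks P. \<Sum>j < nblocks P. N (blk B P P i j))"

definition growth_factor :: "('a::field mat \<Rightarrow> real) \<Rightarrow> 'a mat \<Rightarrow> nat list \<Rightarrow> real" where
  "growth_factor N A I =
     Max {block_sum_norm N (schur A I k) (shift_blocking I k) | k. k < nblocks I}
       / block_sum_norm N A I"

definition block_col_dd :: "('a::field mat \<Rightarrow> real) \<Rightarrow> 'a mat \<Rightarrow> nat list \<Rightarrow> bool" where
  "block_col_dd N A I \<longleftrightarrow> (\<forall>j < nblocks I. invertible_mat (blk A I I j j) \<and>
     (\<Sum>i \<in> {..<nblocks I} - {j}. N (blk A I I i j)) < 1 / N (mat_inv (blk A I I j j)))"

definition block_row_dd :: "('a::field mat \<Rightarrow> real) \<Rightarrow> 'a mat \<Rightarrow> nat list \<Rightarrow> bool" where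
  "block_row_dd N A I \<longleftrightarrow> (\<forall>i < nblocks I. invertible_mat (blk A I I i i) \<and>
     (\<Sum>j \<in> {..<nblocks I} - {i}. N (blk A I I i j)) < 1 / N (mat_inv (blk A I I i i)))"

end

theory Submission
  imports Defs "Jordan_Normal_Form.Determinant"
begin


lemma mat_inv_props:
  fixes B :: "'a::field mat"
  assumes B: "B \<in> carrier_mat q q" and inv: "invertible_mat B"
  shows "mat_inv B \<in> carrier_mat q q" "B * mat_inv B = 1\<^sub>m q" "mat_inv B * B = 1\<^sub>m q"
proof -
  have ex: "\<exists>C. inverts_mat B C \<and> inverts_mat C B" using inv unfolding invertible_mat_def by auto
  have "inverts_mat B (mat_inv B) \<and> inverts_mat (mat_inv B) B"
    unfolding mat_inv_def by (rule someI_ex[OF ex])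
  then have 1: "B * mat_inv B = 1\<^sub>m q" and 2: "mat_inv B * B = 1\<^sub>m (dim_row (mat_inv B))"
    using B unfolding inverts_mat_def by auto
  have r: "dim_row (mat_inv B) = q"
  proof -
    have "dim_col (mat_inv B * B) = dim_col (1\<^sub>m (dim_row (mat_inv B)))" using 2 by simp
    then show ?thesis using B by simp
  qed
  have c: "dim_col (mat_inv B) = q"
  proof -
    have "dim_col (B * mat_inv B) = q" using 1 by simp
    then show ?thesis by simp
  qed
  show "mat_inv B \<in> carrier_mat q q" using r c by auto
  show "B * mat_inv B = 1\<^sub>m q" by fact
  show "mat_inv B * B = 1\<^sub>m q" using 2 r by simp
qed

lemma invertible_iff_det:
  fixes B :: "'a::field mat"
  assumes B: "B \<in> carrier_mat q q"
  shows "invertible_mat B \<longleftrightarrow> det B \<noteq> 0"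
proof
  assume "invertible_mat B"
  from mat_inv_props[OF B this] have "det (B * mat_inv B) = 1" by simp
  then show "det B \<noteq> 0" using det_mult[OF B mat_inv_props(1)[OF B \<open>invertible_mat B\<close>]] by auto
next
  assume "det B \<noteq> 0"
  from det_non_zero_imp_unit[OF B this, of "()"]
  obtain C where C: "C \<in> carrier_mat q q" "B * C = 1\<^sub>m q" "C * B = 1\<^sub>m q"
    unfolding Units_def ring_mat_def by auto
  show "invertible_mat B" unfolding invertible_mat_def inverts_mat_def square_mat.simps
    using B C by (intro conjI exI[of _ C]) auto
qed

locale nfam =
  fixes N :: "'a::real_normed_field mat \<Rightarrow> real"
  assumes nf: "mat_norm_family N" and sm: "submultiplicative N"
begin

lemma N_nonneg: "0 \<le> N B" using nf unfolding mat_norm_family_def by auto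

lemma N_zero_iff: "N B = 0 \<longleftrightarrow> B = 0\<^sub>m (dim_row B) (dim_col B)"
  using nf unfolding mat_norm_family_def by auto

lemma N_pos: "B \<noteq> 0\<^sub>m (dim_row B) (dim_col B) \<Longrightarrow> 0 < N B"
  using N_nonneg N_zero_iff by (metis order_le_less)

lemma N_mult: "dim_col X = dim_row Y \<Longrightarrow> N (X * Y) \<le> N X * N Y"
  using sm unfolding submultiplicative_def by auto

lemma N_mult3: "dim_col X = dim_row Y \<Longrightarrow> dim_col Y = dim_row Z \<Longrightarrow> N (X * Y * Z) \<le> N X * N Y * N Z"
proof -
  assume a: "dim_col X = dim_row Y" "dim_col Y = dim_row Z"
  have "N (X * Y * Z) \<le> N (X * Y) * N Z" using a by (intro N_mult) simp
  also have "\<dots> \<le> N X * N Y * N Z" using N_mult[OF a(1)] N_nonneg[of Z] by (simp add: mult_right_mono)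
  finally show ?thesis .
qed

lemma N_add: "dim_row B = dim_row C \<Longrightarrow> dim_col B = dim_col C \<Longrightarrow> N (B + C) \<le> N B + N C"
  using nf unfolding mat_norm_family_def by auto

lemma N_smult: "N (c \<cdot>\<^sub>m B) = norm c * N B"
  using nf unfolding mat_norm_family_def by auto

lemma N_minus: assumes "dim_row B = dim_row C" "dim_col B = dim_col C"
  shows "N (B - C) \<le> N B + N C"
proof -
  have "B - C = B + ((-1) \<cdot>\<^sub>m C)" using assms by (intro eq_matI) auto
  moreover have "N ((-1) \<cdot>\<^sub>m C) = N C" by (simp add: N_smult)
  ultimately show ?thesis using N_add[of B "(-1) \<cdot>\<^sub>m C"] assms by simp
qed

lemma N_inv_pos: assumes B: "B \<in> carrier_mat q q" and "invertible_mat B" and "0 < q"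
  shows "0 < N (mat_inv B)"
proof (rule N_pos)
  note p = mat_inv_props[OF assms(1,2)]
  show "mat_inv B \<noteq> 0\<^sub>m (dim_row (mat_inv B)) (dim_col (mat_inv B))"
  proof
    assume "mat_inv B = 0\<^sub>m (dim_row (mat_inv B)) (dim_col (mat_inv B))"
    then have "mat_inv B = 0\<^sub>m q q" using p(1) by auto
    then have "B * mat_inv B = 0\<^sub>m q q" using B by simp
    then have "(1\<^sub>m q :: 'a mat) $$ (0,0) = 0\<^sub>m q q $$ (0,0)" using p(2) by simp
    then show False using \<open>0 < q\<close> by simp
  qed
qed

end

context nfam begin

lemma perturb:
  assumes X: "X \<in> carrier_mat q q" and inv: "invertible_mat X" and q: "0 < q"
    and E: "E \<in> carrier_mat q q" and small: "N (mat_inv X) * N E < 1"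
  shows "invertible_mat (X - E)" "1 / N (mat_inv X) - N E \<le> 1 / N (mat_inv (X - E))"
proof -
  note p = mat_inv_props[OF X inv]
  define Xi where "Xi = mat_inv X"
  have Xi: "Xi \<in> carrier_mat q q" "X * Xi = 1\<^sub>m q" "Xi * X = 1\<^sub>m q" using p Xi_def by auto
  have XE: "X - E \<in> carrier_mat q q" using X E by auto
  have a: "0 < N Xi" unfolding Xi_def by (rule N_inv_pos[OF X inv q])
  show invXE: "invertible_mat (X - E)"
  proof (rule ccontr)
    assume "\<not> invertible_mat (X - E)"
    then have "det (X - E) = 0" using invertible_iff_det[OF XE] by simp
    then obtain v where v: "v \<in> carrier_vec q" "v \<noteq> 0\<^sub>v q" "(X - E) *\<^sub>v v = 0\<^sub>v q"
      using det_0_iff_vec_prod_zero_field[OF XE] by auto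
    define V where "V = mat q q (\<lambda>(i,j). v $ i)"
    have V: "V \<in> carrier_mat q q" unfolding V_def by auto
    have col: "\<And>j. j < q \<Longrightarrow> col V j = v" unfolding V_def using v(1) by (intro eq_vecI) auto
    have "(X - E) * V = 0\<^sub>m q q"
    proof (rule eq_matI)
      fix i j assume "i < dim_row (0\<^sub>m q q :: 'a mat)" "j < dim_col (0\<^sub>m q q :: 'a mat)"
      then have ij: "i < q" "j < q" by auto
      have "((X - E) *\<^sub>v v) $ i = 0" using v(3) ij by simp
      then show "((X - E) * V) $$ (i, j) = 0\<^sub>m q q $$ (i, j)"
      proof -
        have "((X - E) * V) $$ (i, j) = row (X - E) i \<bullet> col V j" using ij carrier_matD[OF X] carrier_matD[OF E] carrier_matD[OF V] by simp
        also have "\<dots> = ((X - E) *\<^sub>v v) $ i" using ij carrier_matD[OF X] carrier_matD[OF E] col by simp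
        finally show ?thesis using \<open>((X - E) *\<^sub>v v) $ i = 0\<close> ij by simp
      qed
    qed (use XE V in auto)
    then have "X * V - E * V = 0\<^sub>m q q" using minus_mult_distrib_mat[OF X E V] by simp
    then have XV: "X * V = E * V"
    proof -
      assume h: "X * V - E * V = 0\<^sub>m q q"
      show ?thesis
      proof (rule eq_matI)
        fix i j assume "i < dim_row (E * V)" "j < dim_col (E * V)"
        then have ij: "i < q" "j < q" using E V by auto
        have "(X * V - E * V) $$ (i, j) = 0" using h ij by simp
        then show "(X * V) $$ (i, j) = (E * V) $$ (i, j)" using ij X E V by auto
      qed (use X E V in auto)
    qed
    have "Xi * (X * V) = Xi * X * V" by (rule assoc_mult_mat[symmetric, OF Xi(1) X V])
    also have "\<dots> = V" using Xi V by simp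
    finally have VV: "V = Xi * (E * V)" using XV by simp
    have Vne: "V \<noteq> 0\<^sub>m (dim_row V) (dim_col V)"
    proof
      assume V0: "V = 0\<^sub>m (dim_row V) (dim_col V)"
      then have "\<And>i. i < q \<Longrightarrow> v $ i = 0"
      proof -
        fix i assume i: "i < q"
        have "V $$ (i, 0) = 0" using V0 i q V by auto
        then show "v $ i = 0" using i q unfolding V_def by simp
      qed
      then have "v = 0\<^sub>v q" using v(1) by (intro eq_vecI) auto
      then show False using v(2) by simp
    qed
    have NV: "0 < N V" by (rule N_pos[OF Vne])
    have "N V \<le> N Xi * N E * N V"
    proof -
      have "Xi * (E * V) = Xi * E * V" using Xi E V by simp
      then have "N V = N (Xi * E * V)" using VV by simp
      also have "\<dots> \<le> N Xi * N E * N V" using Xi E V by (intro N_mult3) auto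
      finally show ?thesis .
    qed
    also have "\<dots> < N V" using small NV unfolding Xi_def by simp
    finally show False by simp
  qed
  define Y where "Y = mat_inv (X - E)"
  note py = mat_inv_props[OF XE invXE]
  have Y: "Y \<in> carrier_mat q q" "(X - E) * Y = 1\<^sub>m q" using py Y_def by auto
  have NY: "0 < N Y" unfolding Y_def by (rule N_inv_pos[OF XE invXE q])
  have "X * Y - E * Y = 1\<^sub>m q" using Y minus_mult_distrib_mat[OF X E Y(1)] by simp
  then have XY: "X * Y = 1\<^sub>m q + E * Y"
  proof -
    assume h: "X * Y - E * Y = 1\<^sub>m q"
    show ?thesis
    proof (rule eq_matI)
      fix i j assume "i < dim_row (1\<^sub>m q + E * Y)" "j < dim_col (1\<^sub>m q + E * Y)"
      then have ij: "i < q" "j < q" using E Y by auto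
      have "(X * Y - E * Y) $$ (i, j) = 1\<^sub>m q $$ (i, j)" using h by simp
      then show "(X * Y) $$ (i, j) = (1\<^sub>m q + E * Y) $$ (i, j)" using ij X E Y by (auto simp: algebra_simps)
    qed (use X E Y in auto)
  qed
  have "Xi * (X * Y) = Xi * X * Y" by (rule assoc_mult_mat[symmetric, OF Xi(1) X Y(1)])
  also have "\<dots> = Y" using Xi Y by simp
  finally have Y1: "Y = Xi * (1\<^sub>m q + E * Y)" using XY by simp
  have "Xi * (1\<^sub>m q + E * Y) = Xi * 1\<^sub>m q + Xi * (E * Y)"
    using Xi E Y by (intro mult_add_distrib_mat[of _ q q]) auto
  also have "\<dots> = Xi + Xi * E * Y" using Xi E Y by simp
  finally have YY: "Y = Xi + Xi * E * Y" using Y1 by simp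
  have "N Y \<le> N Xi + N (Xi * E * Y)"
  proof -
    have "N (Xi + Xi * E * Y) \<le> N Xi + N (Xi * E * Y)" using Xi E Y by (intro N_add) auto
    then show ?thesis using YY by simp
  qed
  also have "\<dots> \<le> N Xi + N Xi * N E * N Y" using N_mult3[of Xi E Y] Xi E Y by simp
  finally have ineq: "N Y * (1 - N Xi * N E) \<le> N Xi" by (simp add: algebra_simps)
  show "1 / N (mat_inv X) - N E \<le> 1 / N (mat_inv (X - E))"
    unfolding Xi_def[symmetric] Y_def[symmetric]
    using ineq a NY by (simp add: field_simps)
qed

end


lemma part_lt: "partition_of P m \<Longrightarrow> i < j \<Longrightarrow> j < length P \<Longrightarrow> P ! i < P ! j"
  unfolding partition_of_def by (auto simp: sorted_wrt_iff_nth_less)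

lemma part_le: "partition_of P m \<Longrightarrow> i \<le> j \<Longrightarrow> j < length P \<Longrightarrow> P ! i \<le> P ! j"
  using part_lt[of P m i j] by (cases "i = j") auto

lemma part_0: "partition_of P m \<Longrightarrow> P ! 0 = 0"
  unfolding partition_of_def using hd_conv_nth[of P] by (cases P) auto

lemma part_last: "partition_of P m \<Longrightarrow> P ! (length P - 1) = m"
  unfolding partition_of_def using last_conv_nth[of P] by (cases P) auto

lemma part_bound: "partition_of P m \<Longrightarrow> i < length P \<Longrightarrow> P ! i \<le> m"
  using part_le[of P m i "length P - 1"] part_last[of P m] by auto

lemma part_len: "partition_of P m \<Longrightarrow> length P = Suc (nblocks P)"
  unfolding partition_of_def nblocks_def by auto

lemma blk_carrier: "blk B R C i j \<in> carrier_mat (R ! Suc i - R ! i) (C ! Suc j - C ! j)"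
  unfolding blk_def by auto

lemma blk_index: "r < R ! Suc i - R ! i \<Longrightarrow> c < C ! Suc j - C ! j \<Longrightarrow>
  blk B R C i j $$ (r, c) = B $$ (R ! i + r, C ! j + c)"
  unfolding blk_def by auto

lemma mult3_index:
  assumes "M1 \<in> carrier_mat p q1" "M2 \<in> carrier_mat q1 q2" "M3 \<in> carrier_mat q2 s" "a < p" "b < s"
  shows "(M1 * M2 * M3) $$ (a, b) =
    (\<Sum>l \<in> {0..<q1}. M1 $$ (a, l) * (\<Sum>k \<in> {0..<q2}. M2 $$ (l, k) * M3 $$ (k, b)))"
  using assms by (simp add: scalar_prod_def)

lemma schur_blocks:
  fixes B :: "'a::field mat"
  assumes B: "B \<in> carrier_mat m m" and P: "partition_of P m" and nb: "2 \<le> nblocks P"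
   and d: "d = P ! 1" and sp: "split_block B d d = (B11, B12, B21, B22)"
   and S: "S = B22 - B21 * X * B12" and X: "X \<in> carrier_mat d d"
   and P': "P' = map (\<lambda>x. x - d) (tl P)"
  shows "partition_of P' (m - d)" "nblocks P' = nblocks P - 1" "S \<in> carrier_mat (m - d) (m - d)"
   "B11 = blk B P P 0 0"
   "\<And>i j. i < nblocks P' \<Longrightarrow> j < nblocks P' \<Longrightarrow>
      blk S P' P' i j = blk B P P (Suc i) (Suc j) - blk B P P (Suc i) 0 * X * blk B P P 0 (Suc j)"
proof -
  have lenP: "length P = Suc (nblocks P)" by (rule part_len[OF P])
  have P0: "P ! 0 = 0" by (rule part_0[OF P])
  have dm: "d \<le> m" using part_bound[OF P, of 1] lenP nb d by auto
  have ge_d: "\<And>i. 1 \<le> i \<Longrightarrow> i < length P \<Longrightarrow> d \<le> P ! i" using part_le[OF P] d by auto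
  have lenP': "length P' = nblocks P" using P' lenP by simp
  have P'i: "\<And>i. i < length P' \<Longrightarrow> P' ! i = P ! Suc i - d"
    using P' lenP by (simp add: nth_tl)
  show nbP': "nblocks P' = nblocks P - 1" using lenP' unfolding nblocks_def by simp
  show "partition_of P' (m - d)"
    unfolding partition_of_def
  proof (intro conjI)
    show "2 \<le> length P'" using lenP' nb by simp
    show "sorted_wrt (<) P'"
      unfolding sorted_wrt_iff_nth_less
    proof (intro allI impI)
      fix i j assume ij: "i < j" "j < length P'"
      then have "P ! Suc i < P ! Suc j" using part_lt[OF P, of "Suc i" "Suc j"] lenP lenP' by simp
      moreover have "d \<le> P ! Suc i" using ge_d[of "Suc i"] ij lenP lenP' by simp
      ultimately show "P' ! i < P' ! j" using P'i ij by simp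
    qed
    have "P' \<noteq> []" using lenP' nb by auto
    then show "hd P' = 0" using P'i[of 0] lenP' nb d hd_conv_nth[of P'] by auto
    show "last P' = m - d" using P'i[of "length P' - 1"] lenP' nb part_last[OF P] lenP
        last_conv_nth[of P'] \<open>P' \<noteq> []\<close> by simp
  qed
  have B11: "B11 = mat d d (\<lambda>ij. B $$ ij)" and B12: "B12 = mat d (m - d) (\<lambda>(i,j). B $$ (i, j + d))"
    and B21: "B21 = mat (m - d) d (\<lambda>(i,j). B $$ (i + d, j))"
    and B22: "B22 = mat (m - d) (m - d) (\<lambda>(i,j). B $$ (i + d, j + d))"
    using sp B unfolding split_block_def Let_def by auto
  show Sc: "S \<in> carrier_mat (m - d) (m - d)" using S B12 B21 B22 X by auto
  show "B11 = blk B P P 0 0" unfolding B11 blk_def P0 using d by (intro eq_matI) auto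
  fix i j assume i: "i < nblocks P'" and j: "j < nblocks P'"
  have iP: "Suc (Suc i) < length P" "Suc (Suc j) < length P" using i j nbP' lenP nb by auto
  have Pi: "P' ! i = P ! Suc i - d" "P' ! Suc i = P ! Suc (Suc i) - d"
    "P' ! j = P ! Suc j - d" "P' ! Suc j = P ! Suc (Suc j) - d"
    using P'i i j lenP' nbP' nb unfolding nblocks_def by auto
  have dSi: "d \<le> P ! Suc i" "d \<le> P ! Suc j" using ge_d iP by auto
  have lt: "P ! Suc i < P ! Suc (Suc i)" "P ! Suc j < P ! Suc (Suc j)" using part_lt[OF P] iP by auto
  have bd: "P ! Suc (Suc i) \<le> m" "P ! Suc (Suc j) \<le> m" using part_bound[OF P] iP by auto
  have M1: "blk B P P (Suc i) 0 \<in> carrier_mat (P ! Suc (Suc i) - P ! Suc i) d"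
    using blk_carrier[of B P P "Suc i" 0] P0 d by simp
  have M3: "blk B P P 0 (Suc j) \<in> carrier_mat d (P ! Suc (Suc j) - P ! Suc j)"
    using blk_carrier[of B P P 0 "Suc j"] P0 d by simp
  show "blk S P' P' i j = blk B P P (Suc i) (Suc j) - blk B P P (Suc i) 0 * X * blk B P P 0 (Suc j)"
  proof (rule eq_matI)
    fix r c
    assume "r < dim_row (blk B P P (Suc i) (Suc j) - blk B P P (Suc i) 0 * X * blk B P P 0 (Suc j))"
      "c < dim_col (blk B P P (Suc i) (Suc j) - blk B P P (Suc i) 0 * X * blk B P P 0 (Suc j))"
    then have r: "r < P ! Suc (Suc i) - P ! Suc i" and c: "c < P ! Suc (Suc j) - P ! Suc j"
      using M1 M3 X by auto
    have r': "P' ! i + r < m - d" and c': "P' ! j + c < m - d" using r c Pi dSi lt bd by auto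
    have e1: "P' ! i + r + d = P ! Suc i + r" "P' ! j + c + d = P ! Suc j + c" using Pi dSi by auto
    have "blk S P' P' i j $$ (r, c) = S $$ (P' ! i + r, P' ! j + c)"
      using r c Pi dSi by (intro blk_index) auto
    also have "\<dots> = B22 $$ (P' ! i + r, P' ! j + c) - (B21 * X * B12) $$ (P' ! i + r, P' ! j + c)"
      using r' c' B21 B12 X unfolding S by simp
    also have "\<dots> = B $$ (P' ! i + r + d, P' ! j + c + d) -
       (\<Sum>l \<in> {0..<d}. B $$ (P' ! i + r + d, l) * (\<Sum>k \<in> {0..<d}. X $$ (l, k) * B $$ (k, P' ! j + c + d)))"
      using r' c' X unfolding B22 B21 B12 by (subst mult3_index[of _ "m - d" d _ d _ "m - d"]) auto
    also have "\<dots> = B $$ (P ! Suc i + r, P ! Suc j + c) -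
       (\<Sum>l \<in> {0..<d}. B $$ (P ! Suc i + r, l) * (\<Sum>k \<in> {0..<d}. X $$ (l, k) * B $$ (k, P ! Suc j + c)))"
      unfolding e1 ..
    also have "\<dots> = (blk B P P (Suc i) (Suc j) - blk B P P (Suc i) 0 * X * blk B P P 0 (Suc j)) $$ (r, c)"
      using r c M1 M3 X P0 d
      by (subst index_minus_mat, (auto simp: blk_carrier)[2], subst mult3_index[OF M1 X M3 r c])
        (auto simp: blk_index)
    finally show "blk S P' P' i j $$ (r, c) = (blk B P P (Suc i) (Suc j) - blk B P P (Suc i) 0 * X * blk B P P 0 (Suc j)) $$ (r, c)" .
  next
    show "dim_row (blk S P' P' i j) = dim_row (blk B P P (Suc i) (Suc j) - blk B P P (Suc i) 0 * X * blk B P P 0 (Suc j))"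
      using M1 M3 X Pi dSi unfolding blk_def by auto
    show "dim_col (blk S P' P' i j) = dim_col (blk B P P (Suc i) (Suc j) - blk B P P (Suc i) 0 * X * blk B P P 0 (Suc j))"
      using M1 M3 X Pi dSi unfolding blk_def by auto
  qed
qed



lemma sum_shift_minus:
  fixes h :: "nat \<Rightarrow> real"
  assumes "j < K"
  shows "(\<Sum>i \<in> {..<Suc K} - {Suc j}. h i) = h 0 + (\<Sum>i \<in> {..<K} - {j}. h (Suc i))"
proof -
  have eq: "{..<Suc K} - {Suc j} = insert 0 (Suc ` ({..<K} - {j}))" (is "?L = ?R")
  proof (rule Set.set_eqI)
    fix x show "x \<in> ?L \<longleftrightarrow> x \<in> ?R" by (cases x) auto
  qed
  have "(\<Sum>i \<in> {..<Suc K} - {Suc j}. h i) = h 0 + sum h (Suc ` ({..<K} - {j}))"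
    unfolding eq by (subst sum.insert) auto
  also have "sum h (Suc ` ({..<K} - {j})) = (\<Sum>i \<in> {..<K} - {j}. h (Suc i))"
    by (subst sum.reindex) auto
  finally show ?thesis .
qed

lemma sum_shift_0:
  fixes h :: "nat \<Rightarrow> real"
  shows "(\<Sum>i \<in> {..<Suc K} - {0}. h i) = (\<Sum>i <K. h (Suc i))"
proof -
  have eq: "{..<Suc K} - {0} = Suc ` {..<K}" (is "?L = ?R")
  proof (rule Set.set_eqI)
    fix x show "x \<in> ?L \<longleftrightarrow> x \<in> ?R" by (cases x) auto
  qed
  show ?thesis unfolding eq by (subst sum.reindex) auto
qed

lemma dd_real:
  fixes f g :: "nat \<Rightarrow> real"
  assumes j: "j < K" and g1: "(\<Sum>i<K. g i) \<le> 1" and g0: "\<And>i. 0 \<le> g i" and b0: "0 \<le> \<beta>"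
    and h: "\<beta> + (\<Sum>i \<in> {..<K} - {j}. f i) < D"
  shows "g j * \<beta> \<le> \<beta>" "(\<Sum>i \<in> {..<K} - {j}. f i + g i * \<beta>) < D - g j * \<beta>"
proof -
  have gj: "g j \<le> (\<Sum>i<K. g i)" using j g0 by (intro member_le_sum) auto
  show "g j * \<beta> \<le> \<beta>" using gj g1 b0 g0[of j] by (intro mult_left_le_one_le) auto
  have s: "(\<Sum>i \<in> {..<K} - {j}. g i) = (\<Sum>i<K. g i) - g j" using j by (subst sum_diff1) auto
  have "(\<Sum>i \<in> {..<K} - {j}. f i + g i * \<beta>) = (\<Sum>i \<in> {..<K} - {j}. f i) + (\<Sum>i \<in> {..<K} - {j}. g i) * \<beta>"
    by (simp add: sum.distrib sum_distrib_right)
  also have "\<dots> = (\<Sum>i \<in> {..<K} - {j}. f i) + (\<Sum>i<K. g i) * \<beta> - g j * \<beta>" unfolding s by (simp add: algebra_simps)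
  also have "\<dots> \<le> (\<Sum>i \<in> {..<K} - {j}. f i) + \<beta> - g j * \<beta>"
    using mult_left_le_one_le[OF b0 sum_nonneg[of "{..<K}" g] g1] g0 by simp
  also have "\<dots> < D - g j * \<beta>" using h by simp
  finally show "(\<Sum>i \<in> {..<K} - {j}. f i + g i * \<beta>) < D - g j * \<beta>" .
qed

lemma bsn_real:
  fixes b :: "nat \<Rightarrow> nat \<Rightarrow> real"
  assumes b0: "\<And>i j. 0 \<le> b i j" and a0: "0 \<le> a"
    and c: "(\<Sum>i<K. b (Suc i) 0 * a) \<le> 1 \<or> (\<Sum>j<K. a * b 0 (Suc j)) \<le> 1"
  shows "(\<Sum>i<K. \<Sum>j<K. b (Suc i) (Suc j) + b (Suc i) 0 * a * b 0 (Suc j)) \<le> (\<Sum>i<Suc K. \<Sum>j<Suc K. b i j)"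
proof -
  have R: "(\<Sum>i<Suc K. \<Sum>j<Suc K. b i j) = b 0 0 + (\<Sum>j<K. b 0 (Suc j)) + (\<Sum>i<K. b (Suc i) 0)
     + (\<Sum>i<K. \<Sum>j<K. b (Suc i) (Suc j))"
    by (simp only: sum.lessThan_Suc_shift sum.distrib)
  have L: "(\<Sum>i<K. \<Sum>j<K. b (Suc i) (Suc j) + b (Suc i) 0 * a * b 0 (Suc j)) =
     (\<Sum>i<K. \<Sum>j<K. b (Suc i) (Suc j)) + (\<Sum>i<K. \<Sum>j<K. b (Suc i) 0 * a * b 0 (Suc j))"
    by (simp add: sum.distrib)
  have "(\<Sum>i<K. \<Sum>j<K. b (Suc i) 0 * a * b 0 (Suc j)) \<le> (\<Sum>j<K. b 0 (Suc j)) + (\<Sum>i<K. b (Suc i) 0)"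
    using c
  proof
    assume c1: "(\<Sum>i<K. b (Suc i) 0 * a) \<le> 1"
    have "(\<Sum>i<K. \<Sum>j<K. b (Suc i) 0 * a * b 0 (Suc j)) = (\<Sum>j<K. (\<Sum>i<K. b (Suc i) 0 * a) * b 0 (Suc j))"
      by (subst sum.swap) (simp add: sum_distrib_right)
    also have "\<dots> \<le> (\<Sum>j<K. 1 * b 0 (Suc j))"
      by (intro sum_mono mult_right_mono c1 b0)
    also have "\<dots> \<le> (\<Sum>j<K. b 0 (Suc j)) + (\<Sum>i<K. b (Suc i) 0)"
      using b0 by (simp add: sum_nonneg)
    finally show ?thesis .
  next
    assume c1: "(\<Sum>j<K. a * b 0 (Suc j)) \<le> 1"
    have "(\<Sum>i<K. \<Sum>j<K. b (Suc i) 0 * a * b 0 (Suc j)) = (\<Sum>i<K. b (Suc i) 0 * (\<Sum>j<K. a * b 0 (Suc j)))"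
      by (simp add: sum_distrib_left mult.assoc)
    also have "\<dots> \<le> (\<Sum>i<K. b (Suc i) 0 * 1)"
      by (intro sum_mono mult_left_mono c1 b0)
    also have "\<dots> \<le> (\<Sum>j<K. b 0 (Suc j)) + (\<Sum>i<K. b (Suc i) 0)"
      using b0 by (simp add: sum_nonneg)
    finally show ?thesis .
  qed
  then show ?thesis unfolding R L using b0[of 0 0] by simp
qed



definition ddx :: "('a::field mat \<Rightarrow> real) \<Rightarrow> 'a mat \<Rightarrow> nat list \<Rightarrow> bool" where
  "ddx N B P \<longleftrightarrow> block_col_dd N B P \<or> block_row_dd N B P"

context nfam begin

lemma schur_step:
  fixes B :: "'a mat"
  assumes B: "B \<in> carrier_mat m m" and P: "partition_of P m" and nb: "2 \<le> nblocks P"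
   and d: "d = P ! 1" and sp: "split_block B d d = (B11, B12, B21, B22)"
   and S: "S = B22 - B21 * mat_inv B11 * B12"
   and P': "P' = map (\<lambda>x. x - d) (tl P)" and dd: "ddx N B P"
  shows "partition_of P' (m - d)" "nblocks P' = nblocks P - 1" "S \<in> carrier_mat (m - d) (m - d)"
    "ddx N S P'" "block_sum_norm N S P' \<le> block_sum_norm N B P"
    "B11 = blk B P P 0 0" "invertible_mat B11"
proof -
  define K where "K = nblocks P - 1"
  have nbK: "nblocks P = Suc K" using nb K_def by simp
  have lenP: "length P = Suc (nblocks P)" by (rule part_len[OF P])
  have P0: "P ! 0 = 0" by (rule part_0[OF P])
  have sz: "\<And>i. i < nblocks P \<Longrightarrow> 0 < P ! Suc i - P ! i" using part_lt[OF P] lenP by fastforce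
  have B11c: "blk B P P 0 0 \<in> carrier_mat d d" using blk_carrier[of B P P 0 0] P0 d by simp
  have inv0: "invertible_mat (blk B P P 0 0)" using dd nbK unfolding ddx_def block_col_dd_def block_row_dd_def
    by auto
  define X where "X = mat_inv (blk B P P 0 0)"
  have Xc: "X \<in> carrier_mat d d" unfolding X_def by (rule mat_inv_props(1)[OF B11c inv0])
  have d0: "0 < d" using sz[of 0] nbK P0 d by simp
  have a0: "0 < N X" unfolding X_def by (rule N_inv_pos[OF B11c inv0 d0])
  have SB: "S = B22 - B21 * X * B12" using S X_def schur_blocks(4)[OF B P nb d sp refl Xc P'] by simp
  note sb = schur_blocks[OF B P nb d sp SB Xc P']
  show "partition_of P' (m - d)" "nblocks P' = nblocks P - 1" "S \<in> carrier_mat (m - d) (m - d)"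
    "B11 = blk B P P 0 0" using sb by auto
  then have nbP': "nblocks P' = K" unfolding K_def by simp
  show "invertible_mat B11" using inv0 sb(4) by simp
  define b where "b i j = N (blk B P P i j)" for i j
  have bnn: "\<And>i j. 0 \<le> b i j" unfolding b_def by (rule N_nonneg)
  have blkS: "\<And>i j. i < K \<Longrightarrow> j < K \<Longrightarrow>
      blk S P' P' i j = blk B P P (Suc i) (Suc j) - blk B P P (Suc i) 0 * X * blk B P P 0 (Suc j)"
    using sb(5) nbP' by auto
  have c10: "blk B P P i 0 \<in> carrier_mat (P ! Suc i - P ! i) d" for i
    using blk_carrier[of B P P i 0] P0 d by simp
  have c01: "blk B P P 0 j \<in> carrier_mat d (P ! Suc j - P ! j)" for j
    using blk_carrier[of B P P 0 j] P0 d by simp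
  have dimsE: "blk B P P (Suc i) 0 * X * blk B P P 0 (Suc j) \<in>
      carrier_mat (P ! Suc (Suc i) - P ! Suc i) (P ! Suc (Suc j) - P ! Suc j)" for i j
    by (rule mult_carrier_mat[OF mult_carrier_mat[OF c10 Xc] c01])
  have NE: "N (blk B P P (Suc i) 0 * X * blk B P P 0 (Suc j)) \<le> b (Suc i) 0 * N X * b 0 (Suc j)" for i j
    unfolding b_def using carrier_matD[OF c10[of "Suc i"]] carrier_matD[OF c01[of "Suc j"]] carrier_matD[OF Xc]
    by (intro N_mult3) auto
  have bound: "\<And>i j. i < K \<Longrightarrow> j < K \<Longrightarrow>
      N (blk S P' P' i j) \<le> b (Suc i) (Suc j) + b (Suc i) 0 * N X * b 0 (Suc j)"
  proof -
    fix i j assume ij: "i < K" "j < K"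
    have "N (blk S P' P' i j) \<le> N (blk B P P (Suc i) (Suc j)) + N (blk B P P (Suc i) 0 * X * blk B P P 0 (Suc j))"
      unfolding blkS[OF ij] using dimsE[of i j] blk_carrier[of B P P "Suc i" "Suc j"]
      by (intro N_minus) auto
    then show "N (blk S P' P' i j) \<le> b (Suc i) (Suc j) + b (Suc i) 0 * N X * b 0 (Suc j)"
      using NE[of i j] unfolding b_def by simp
  qed
  have cond: "(\<Sum>i<K. b (Suc i) 0 * N X) < 1 \<or> (\<Sum>j<K. N X * b 0 (Suc j)) < 1"
    using dd unfolding ddx_def
  proof
    assume "block_col_dd N B P"
    then have "(\<Sum>i \<in> {..<Suc K} - {0}. b i 0) < 1 / N X"
      unfolding block_col_dd_def nbK b_def X_def by auto
    then have "(\<Sum>i<K. b (Suc i) 0) < 1 / N X" using sum_shift_0[of "\<lambda>i. b i 0" K] by simp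
    then have "(\<Sum>i<K. b (Suc i) 0) * N X < 1" using a0 by (simp add: field_simps)
    then show ?thesis by (simp add: sum_distrib_right)
  next
    assume "block_row_dd N B P"
    then have "(\<Sum>j \<in> {..<Suc K} - {0}. b 0 j) < 1 / N X"
      unfolding block_row_dd_def nbK b_def X_def by auto
    then have "(\<Sum>j<K. b 0 (Suc j)) < 1 / N X" using sum_shift_0[of "b 0" K] by simp
    then have "N X * (\<Sum>j<K. b 0 (Suc j)) < 1" using a0 by (simp add: field_simps)
    then show ?thesis by (simp add: sum_distrib_left)
  qed
  show "block_sum_norm N S P' \<le> block_sum_norm N B P"
  proof -
    have "block_sum_norm N S P' = (\<Sum>i<K. \<Sum>j<K. N (blk S P' P' i j))"
      unfolding block_sum_norm_def nbP' ..
    also have "\<dots> \<le> (\<Sum>i<K. \<Sum>j<K. b (Suc i) (Suc j) + b (Suc i) 0 * N X * b 0 (Suc j))"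
      by (intro sum_mono bound) auto
    also have "\<dots> \<le> (\<Sum>i<Suc K. \<Sum>j<Suc K. b i j)"
      using cond by (intro bsn_real bnn) (use a0 in auto)
    also have "\<dots> = block_sum_norm N B P" unfolding block_sum_norm_def nbK b_def ..
    finally show ?thesis .
  qed
  show "ddx N S P'"
    using dd unfolding ddx_def
  proof
    assume col: "block_col_dd N B P"
    then have c1: "(\<Sum>i<K. b (Suc i) 0 * N X) < 1"
      using cond
    proof -
      have "(\<Sum>i \<in> {..<Suc K} - {0}. b i 0) < 1 / N X"
        using col unfolding block_col_dd_def nbK b_def X_def by auto
      then have "(\<Sum>i<K. b (Suc i) 0) < 1 / N X" using sum_shift_0[of "\<lambda>i. b i 0" K] by simp
      then have "(\<Sum>i<K. b (Suc i) 0) * N X < 1" using a0 by (simp add: field_simps)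
      then show ?thesis by (simp add: sum_distrib_right)
    qed
    have "block_col_dd N S P'"
      unfolding block_col_dd_def nbP'
    proof (intro allI impI)
      fix j assume j: "j < K"
      define Bj where "Bj = blk B P P (Suc j) (Suc j)"
      define E where "E = blk B P P (Suc j) 0 * X * blk B P P 0 (Suc j)"
      define q where "q = P ! Suc (Suc j) - P ! Suc j"
      have q0: "0 < q" unfolding q_def using sz[of "Suc j"] j nbK by simp
      have Bjc: "Bj \<in> carrier_mat q q" unfolding Bj_def q_def by (rule blk_carrier)
      have Ec: "E \<in> carrier_mat q q" unfolding E_def q_def by (rule dimsE)
      have colj: "invertible_mat Bj" "(\<Sum>i \<in> {..<Suc K} - {Suc j}. b i (Suc j)) < 1 / N (mat_inv Bj)"
        using col j unfolding block_col_dd_def nbK b_def Bj_def by auto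
      have h: "b 0 (Suc j) + (\<Sum>i \<in> {..<K} - {j}. b (Suc i) (Suc j)) < 1 / N (mat_inv Bj)"
        using colj(2) sum_shift_minus[OF j, of "\<lambda>i. b i (Suc j)"] by simp
      have gnn: "\<And>i. 0 \<le> b (Suc i) 0 * N X" using a0 bnn by (simp add: mult_nonneg_nonneg)
      note dr = dd_real[where f="\<lambda>i. b (Suc i) (Suc j)", OF j less_imp_le[OF c1] gnn bnn h]
      have dr1: "b (Suc j) 0 * N X * b 0 (Suc j) \<le> b 0 (Suc j)" 
        and dr2: "(\<Sum>i \<in> {..<K} - {j}. b (Suc i) (Suc j) + b (Suc i) 0 * N X * b 0 (Suc j))
          < 1 / N (mat_inv Bj) - b (Suc j) 0 * N X * b 0 (Suc j)"
        using dr a0 bnn by (auto simp: mult_nonneg_nonneg)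
      have NEj: "N E \<le> b (Suc j) 0 * N X * b 0 (Suc j)" unfolding E_def by (rule NE)
      have sumnn: "0 \<le> (\<Sum>i \<in> {..<K} - {j}. b (Suc i) (Suc j))" by (intro sum_nonneg bnn)
      have ai: "0 < N (mat_inv Bj)" by (rule N_inv_pos[OF Bjc colj(1) q0])
      have "N E < 1 / N (mat_inv Bj)" using NEj dr1 h sumnn by linarith
      then have small: "N (mat_inv Bj) * N E < 1" using ai by (simp add: field_simps)
      note pt = perturb[OF Bjc colj(1) q0 Ec small]
      have eqj: "blk S P' P' j j = Bj - E" unfolding Bj_def E_def using blkS[OF j j] .
      have "(\<Sum>i \<in> {..<K} - {j}. N (blk S P' P' i j)) \<le>
          (\<Sum>i \<in> {..<K} - {j}. b (Suc i) (Suc j) + b (Suc i) 0 * N X * b 0 (Suc j))"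
        using j by (intro sum_mono bound) auto
      also have "\<dots> < 1 / N (mat_inv Bj) - N E" using dr2 NEj by linarith
      also have "\<dots> \<le> 1 / N (mat_inv (Bj - E))" by (rule pt(2))
      finally show "invertible_mat (blk S P' P' j j) \<and>
         (\<Sum>i \<in> {..<K} - {j}. N (blk S P' P' i j)) < 1 / N (mat_inv (blk S P' P' j j))"
        unfolding eqj using pt(1) by simp
    qed
    then show "block_col_dd N S P' \<or> block_row_dd N S P'" by simp
  next
    assume row: "block_row_dd N B P"
    have c1: "(\<Sum>j<K. N X * b 0 (Suc j)) < 1"
    proof -
      have "(\<Sum>j \<in> {..<Suc K} - {0}. b 0 j) < 1 / N X"
        using row unfolding block_row_dd_def nbK b_def X_def by auto
      then have "(\<Sum>j<K. b 0 (Suc j)) < 1 / N X" using sum_shift_0[of "b 0" K] by simp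
      then have "N X * (\<Sum>j<K. b 0 (Suc j)) < 1" using a0 by (simp add: field_simps)
      then show ?thesis by (simp add: sum_distrib_left)
    qed
    have "block_row_dd N S P'"
      unfolding block_row_dd_def nbP'
    proof (intro allI impI)
      fix i assume i: "i < K"
      define Bi where "Bi = blk B P P (Suc i) (Suc i)"
      define E where "E = blk B P P (Suc i) 0 * X * blk B P P 0 (Suc i)"
      define q where "q = P ! Suc (Suc i) - P ! Suc i"
      have q0: "0 < q" unfolding q_def using sz[of "Suc i"] i nbK by simp
      have Bic: "Bi \<in> carrier_mat q q" unfolding Bi_def q_def by (rule blk_carrier)
      have Ec: "E \<in> carrier_mat q q" unfolding E_def q_def by (rule dimsE)
      have rowi: "invertible_mat Bi" "(\<Sum>j \<in> {..<Suc K} - {Suc i}. b (Suc i) j) < 1 / N (mat_inv Bi)"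
        using row i unfolding block_row_dd_def nbK b_def Bi_def by auto
      have h: "b (Suc i) 0 + (\<Sum>j \<in> {..<K} - {i}. b (Suc i) (Suc j)) < 1 / N (mat_inv Bi)"
        using rowi(2) sum_shift_minus[OF i, of "\<lambda>j. b (Suc i) j"] by simp
      have gnn: "\<And>j. 0 \<le> N X * b 0 (Suc j)" using a0 bnn by (simp add: mult_nonneg_nonneg)
      note dr = dd_real[OF i less_imp_le[OF c1] gnn bnn h]
      have dr1: "N X * b 0 (Suc i) * b (Suc i) 0 \<le> b (Suc i) 0" 
        and dr2: "(\<Sum>j \<in> {..<K} - {i}. b (Suc i) (Suc j) + N X * b 0 (Suc j) * b (Suc i) 0)
          < 1 / N (mat_inv Bi) - N X * b 0 (Suc i) * b (Suc i) 0"
        using dr by auto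
      have NEi: "N E \<le> N X * b 0 (Suc i) * b (Suc i) 0" unfolding E_def using NE[of i i]
        by (simp add: mult_ac)
      have sumnn: "0 \<le> (\<Sum>j \<in> {..<K} - {i}. b (Suc i) (Suc j))" by (intro sum_nonneg bnn)
      have ai: "0 < N (mat_inv Bi)" by (rule N_inv_pos[OF Bic rowi(1) q0])
      have "N E < 1 / N (mat_inv Bi)" using NEi dr1 h sumnn by linarith
      then have small: "N (mat_inv Bi) * N E < 1" using ai by (simp add: field_simps)
      note pt = perturb[OF Bic rowi(1) q0 Ec small]
      have eqi: "blk S P' P' i i = Bi - E" unfolding Bi_def E_def using blkS[OF i i] .
      have "(\<Sum>j \<in> {..<K} - {i}. N (blk S P' P' i j)) \<le>
          (\<Sum>j \<in> {..<K} - {i}. b (Suc i) (Suc j) + N X * b 0 (Suc j) * b (Suc i) 0)"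
        using i bound by (intro sum_mono) (auto simp: mult_ac)
      also have "\<dots> < 1 / N (mat_inv Bi) - N E" using dr2 NEi by linarith
      also have "\<dots> \<le> 1 / N (mat_inv (Bi - E))" by (rule pt(2))
      finally show "invertible_mat (blk S P' P' i i) \<and>
         (\<Sum>j \<in> {..<K} - {i}. N (blk S P' P' i j)) < 1 / N (mat_inv (blk S P' P' i i))"
        unfolding eqi using pt(1) by simp
    qed
    then show "block_col_dd N S P' \<or> block_row_dd N S P'" by simp
  qed
qed

end


lemma det_schur:
  fixes B :: "'a::field mat"
  assumes B: "B \<in> carrier_mat m m" and dm: "d \<le> m"
    and sp: "split_block B d d = (B11, B12, B21, B22)" and inv: "invertible_mat B11"
  shows "det B = det B11 * det (B22 - B21 * mat_inv B11 * B12)"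
proof -
  have dims: "dim_row B = d + (m - d)" "dim_col B = d + (m - d)" using B dm by auto
  note spb = split_block[OF sp dims]
  define X where "X = mat_inv B11"
  define S where "S = B22 - B21 * X * B12"
  note xp = mat_inv_props[OF spb(1) inv, folded X_def]
  have Sc: "S \<in> carrier_mat (m - d) (m - d)" unfolding S_def using spb xp by auto
  define L where "L = four_block_mat (1\<^sub>m d) (0\<^sub>m d (m - d)) (B21 * X) (1\<^sub>m (m - d))"
  define U where "U = four_block_mat B11 B12 (0\<^sub>m (m - d) d) S"
  have Lc: "L \<in> carrier_mat m m" unfolding L_def using four_block_carrier_mat[of "1\<^sub>m d" d d "1\<^sub>m (m - d)" "m - d" "m - d"] dm by auto
  have Uc: "U \<in> carrier_mat m m" unfolding U_def using four_block_carrier_mat[OF spb(1) Sc] dm by auto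
  have "L * U = four_block_mat (1\<^sub>m d * B11 + 0\<^sub>m d (m - d) * 0\<^sub>m (m - d) d)
      (1\<^sub>m d * B12 + 0\<^sub>m d (m - d) * S) (B21 * X * B11 + 1\<^sub>m (m - d) * 0\<^sub>m (m - d) d)
      (B21 * X * B12 + 1\<^sub>m (m - d) * S)"
    unfolding L_def U_def using spb xp Sc by (intro mult_four_block_mat) auto
  also have "1\<^sub>m d * B11 + 0\<^sub>m d (m - d) * 0\<^sub>m (m - d) d = B11" using spb by simp
  also have "1\<^sub>m d * B12 + 0\<^sub>m d (m - d) * S = B12" using spb Sc by simp
  also have "B21 * X * B11 + 1\<^sub>m (m - d) * 0\<^sub>m (m - d) d = B21"
  proof -
    have "B21 * X * B11 = B21 * (X * B11)" using spb xp by (intro assoc_mult_mat) auto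
    then show ?thesis using spb xp by simp
  qed
  also have "B21 * X * B12 + 1\<^sub>m (m - d) * S = B22"
  proof -
    have "1\<^sub>m (m - d) * S = S" using Sc by simp
    moreover have "B21 * X * B12 + S = B22" unfolding S_def
      by (rule eq_matI) (use spb xp in auto)
    ultimately show ?thesis by simp
  qed
  finally have LU: "L * U = B" using spb(5) by simp
  have dL: "det L = 1" unfolding L_def
    by (subst det_four_block_mat_upper_right_zero[of _ d _ "m - d"]) (use spb xp in auto)
  have dU: "det U = det B11 * det S" unfolding U_def
    by (rule det_four_block_mat_lower_left_zero[OF spb(1) spb(2) refl Sc])
  have "det B = det L * det U" unfolding LU[symmetric] by (rule det_mult[OF Lc Uc])
  then show ?thesis using dL dU unfolding S_def X_def by simp
qed

context nfam begin

lemma ddx_invertible: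
  "B \<in> carrier_mat m m \<Longrightarrow> partition_of P m \<Longrightarrow> ddx N B P \<Longrightarrow> invertible_mat B"
proof (induction "nblocks P" arbitrary: B m P rule: less_induct)
  case less
  note B = less.prems(1) and P = less.prems(2) and dd = less.prems(3)
  have lenP: "length P = Suc (nblocks P)" by (rule part_len[OF P])
  have nb1: "1 \<le> nblocks P" using P unfolding partition_of_def nblocks_def by auto
  show ?case
  proof (cases "nblocks P = 1")
    case True
    have P1: "P ! Suc 0 = m" using part_last[OF P] lenP True by simp
    have "blk B P P 0 0 = B" unfolding blk_def using B P1 part_0[OF P] by (intro eq_matI) auto
    moreover have "invertible_mat (blk B P P 0 0)" using dd True
      unfolding ddx_def block_col_dd_def block_row_dd_def by auto
    ultimately show ?thesis by simp
  next
    case False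
    then have nb: "2 \<le> nblocks P" using nb1 by simp
    define d where "d = P ! 1"
    obtain B11 B12 B21 B22 where sp: "split_block B d d = (B11, B12, B21, B22)" by (cases "split_block B d d") auto
    define S where "S = B22 - B21 * mat_inv B11 * B12"
    define P' where "P' = map (\<lambda>x. x - d) (tl P)"
    note st = schur_step[OF B P nb d_def sp S_def P'_def dd]
    have dm: "d \<le> m" unfolding d_def using part_bound[OF P, of 1] lenP nb by simp
    have "invertible_mat S"
      using less.hyps[of P' S "m - d"] st nb by auto
    then have "det S \<noteq> 0" using invertible_iff_det st(3) by blast
    moreover have "det B11 \<noteq> 0" using invertible_iff_det[of B11 d] st(7) st(6) blk_carrier[of B P P 0 0]
      part_0[OF P] d_def by auto
    ultimately have "det B \<noteq> 0" using det_schur[OF B dm sp st(7)] S_def by simp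
    then show ?thesis using invertible_iff_det[OF B] by simp
  qed
qed

end


context nfam begin

lemma N_invertible_pos: assumes B: "B \<in> carrier_mat q q" and "invertible_mat B" and "0 < q"
  shows "0 < N B"
proof (rule N_pos)
  note p = mat_inv_props[OF assms(1,2)]
  show "B \<noteq> 0\<^sub>m (dim_row B) (dim_col B)"
  proof
    assume "B = 0\<^sub>m (dim_row B) (dim_col B)"
    then have "B = 0\<^sub>m q q" using B by auto
    then have "B * mat_inv B = 0\<^sub>m q q" using p(1) by simp
    then have "(1\<^sub>m q :: 'a mat) $$ (0,0) = 0\<^sub>m q q $$ (0,0)" using p(2) by simp
    then show False using \<open>0 < q\<close> by simp
  qed
qed

lemma schur_chain:
  fixes A :: "'a mat"
  assumes A: "A \<in> carrier_mat n n" and I: "partition_of I n" and dd: "ddx N A I"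
  shows "k < nblocks I \<Longrightarrow> schur A I k \<in> carrier_mat (n - I ! k) (n - I ! k) \<and>
    partition_of (shift_blocking I k) (n - I ! k) \<and> nblocks (shift_blocking I k) = nblocks I - k \<and>
    ddx N (schur A I k) (shift_blocking I k) \<and>
    block_sum_norm N (schur A I k) (shift_blocking I k) \<le> block_sum_norm N A I"
proof (induction k)
  case 0
  have I0: "I ! 0 = 0" by (rule part_0[OF I])
  have sh: "shift_blocking I 0 = I" unfolding shift_blocking_def I0 by simp
  show ?case using A I dd unfolding sh I0 by simp
next
  case (Suc k)
  have lenI: "length I = Suc (nblocks I)" by (rule part_len[OF I])
  from Suc.prems have k: "k < nblocks I" by simp
  note IH = Suc.IH[OF k]
  define B where "B = schur A I k"
  define P where "P = shift_blocking I k"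
  define m where "m = n - I ! k"
  have B: "B \<in> carrier_mat m m" and P: "partition_of P m" and nbP: "nblocks P = nblocks I - k"
    and ddB: "ddx N B P" and bsnB: "block_sum_norm N B P \<le> block_sum_norm N A I"
    using IH unfolding B_def P_def m_def by auto
  have nb: "2 \<le> nblocks P" using nbP Suc.prems by simp
  have le1: "I ! k \<le> I ! Suc k" using part_le[OF I, of k "Suc k"] lenI k by simp
  have le2: "I ! Suc k \<le> n" using part_bound[OF I, of "Suc k"] lenI Suc.prems by simp
  define d where "d = P ! 1"
  have dr: "drop k I ! 1 = I ! Suc k" using lenI Suc.prems by (subst nth_drop) auto
  have d: "d = I ! Suc k - I ! k" unfolding d_def P_def shift_blocking_def using lenI Suc.prems dr by simp
  obtain B11 B12 B21 B22 where sp: "split_block B d d = (B11, B12, B21, B22)" by (cases "split_block B d d") auto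
  define S where "S = B22 - B21 * mat_inv B11 * B12"
  define P' where "P' = map (\<lambda>x. x - d) (tl P)"
  note st = schur_step[OF B P nb d_def sp S_def P'_def ddB]
  have schS: "schur A I (Suc k) = S" using sp unfolding S_def by (simp add: Let_def B_def d)
  have shP: "shift_blocking I (Suc k) = P'"
  proof (rule nth_equalityI)
    show "length (shift_blocking I (Suc k)) = length P'"
      unfolding P'_def P_def shift_blocking_def by simp
    fix i assume "i < length (shift_blocking I (Suc k))"
    then have i: "Suc k + i < length I" unfolding shift_blocking_def by simp
    have "I ! Suc k \<le> I ! (Suc k + i)" using part_le[OF I, of "Suc k" "Suc k + i"] i by simp
    moreover have "drop (Suc k) I ! i = I ! (Suc k + i)" using i by (subst nth_drop) auto
    moreover have "tl (map (\<lambda>x. x - I ! k) (drop k I)) ! i = I ! (Suc k + i) - I ! k"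
    proof -
      have "drop k I ! Suc i = I ! (k + Suc i)" using i by (subst nth_drop) auto
      then show ?thesis using i by (simp add: nth_tl)
    qed
    moreover have "I ! k \<le> I ! (Suc k + i)" using part_le[OF I, of k "Suc k + i"] i by simp
    ultimately show "shift_blocking I (Suc k) ! i = P' ! i"
      unfolding P'_def P_def shift_blocking_def d using i le1
      by (simp add: nth_tl)
  qed
  have md: "m - d = n - I ! Suc k" unfolding m_def d using le1 le2 by simp
  show ?case unfolding schS shP md[symmetric] using st bsnB nbP by auto
qed

lemma lead_dd:
  fixes A :: "'a mat"
  assumes A: "A \<in> carrier_mat n n" and I: "partition_of I n" and dd: "ddx N A I"
    and k: "1 \<le> k" "k \<le> nblocks I"
  shows "lead A (I ! k) \<in> carrier_mat (I ! k) (I ! k)" "partition_of (take (Suc k) I) (I ! k)"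
    "ddx N (lead A (I ! k)) (take (Suc k) I)"
proof -
  have lenI: "length I = Suc (nblocks I)" by (rule part_len[OF I])
  define T where "T = take (Suc k) I"
  show "lead A (I ! k) \<in> carrier_mat (I ! k) (I ! k)" unfolding lead_def by simp
  have lenT: "length T = Suc k" unfolding T_def using lenI k by simp
  have Ti: "\<And>i. i \<le> k \<Longrightarrow> T ! i = I ! i" unfolding T_def by simp
  have nbT: "nblocks T = k" unfolding nblocks_def lenT by simp
  show PT: "partition_of (take (Suc k) I) (I ! k)"
    unfolding T_def[symmetric] partition_of_def
  proof (intro conjI)
    show "2 \<le> length T" using lenT k by simp
    show "sorted_wrt (<) T" unfolding T_def using I unfolding partition_of_def
      by (simp add: sorted_wrt_take)
    have "T \<noteq> []" using lenT by auto
    then show "hd T = 0" using hd_conv_nth[of T] Ti[of 0] part_0[OF I] by simp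
    show "last T = I ! k" using last_conv_nth[of T] \<open>T \<noteq> []\<close> lenT Ti[of k] by simp
  qed
  have blkeq: "blk (lead A (I ! k)) T T i j = blk A I I i j" if ij: "i < k" "j < k" for i j
  proof -
    have T: "T ! i = I ! i" "T ! Suc i = I ! Suc i" "T ! j = I ! j" "T ! Suc j = I ! Suc j"
      using Ti ij by auto
    have bi: "I ! Suc i \<le> I ! k" "I ! Suc j \<le> I ! k" using part_le[OF I] ij lenI k by auto
    show ?thesis unfolding blk_def T lead_def using bi
      by (intro eq_matI) auto
  qed
  have sub: "(\<Sum>i \<in> {..<k} - {j}. f i) \<le> (\<Sum>i \<in> {..<nblocks I} - {j}. f i)"
    if "\<And>i. 0 \<le> f i" for f :: "nat \<Rightarrow> real" and j
    using that k by (intro sum_mono2) auto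
  show "ddx N (lead A (I ! k)) (take (Suc k) I)"
    using dd unfolding ddx_def T_def[symmetric]
  proof
    assume col: "block_col_dd N A I"
    have "block_col_dd N (lead A (I ! k)) T"
      unfolding block_col_dd_def nbT
    proof (intro allI impI)
      fix j assume j: "j < k"
      have "(\<Sum>i \<in> {..<k} - {j}. N (blk (lead A (I ! k)) T T i j)) = (\<Sum>i \<in> {..<k} - {j}. N (blk A I I i j))"
        using blkeq j by (intro sum.cong) auto
      also have "\<dots> \<le> (\<Sum>i \<in> {..<nblocks I} - {j}. N (blk A I I i j))" by (rule sub[OF N_nonneg])
      finally have le: "(\<Sum>i \<in> {..<k} - {j}. N (blk (lead A (I ! k)) T T i j)) \<le> (\<Sum>i \<in> {..<nblocks I} - {j}. N (blk A I I i j))" .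
      have c: "invertible_mat (blk A I I j j)" "(\<Sum>i \<in> {..<nblocks I} - {j}. N (blk A I I i j)) < 1 / N (mat_inv (blk A I I j j))"
        using col j k unfolding block_col_dd_def by auto
      show "invertible_mat (blk (lead A (I ! k)) T T j j) \<and>
        (\<Sum>i \<in> {..<k} - {j}. N (blk (lead A (I ! k)) T T i j)) < 1 / N (mat_inv (blk (lead A (I ! k)) T T j j))"
        unfolding blkeq[OF j j] using c le by linarith
    qed
    then show "block_col_dd N (lead A (I ! k)) T \<or> block_row_dd N (lead A (I ! k)) T" by simp
  next
    assume row: "block_row_dd N A I"
    have "block_row_dd N (lead A (I ! k)) T"
      unfolding block_row_dd_def nbT
    proof (intro allI impI)
      fix i assume i: "i < k"
      have "(\<Sum>j \<in> {..<k} - {i}. N (blk (lead A (I ! k)) T T i j)) = (\<Sum>j \<in> {..<k} - {i}. N (blk A I I i j))"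
        using blkeq i by (intro sum.cong) auto
      also have "\<dots> \<le> (\<Sum>j \<in> {..<nblocks I} - {i}. N (blk A I I i j))" by (rule sub[OF N_nonneg])
      finally have le: "(\<Sum>j \<in> {..<k} - {i}. N (blk (lead A (I ! k)) T T i j)) \<le> (\<Sum>j \<in> {..<nblocks I} - {i}. N (blk A I I i j))" .
      have c: "invertible_mat (blk A I I i i)" "(\<Sum>j \<in> {..<nblocks I} - {i}. N (blk A I I i j)) < 1 / N (mat_inv (blk A I I i i))"
        using row i k unfolding block_row_dd_def by auto
      show "invertible_mat (blk (lead A (I ! k)) T T i i) \<and>
        (\<Sum>j \<in> {..<k} - {i}. N (blk (lead A (I ! k)) T T i j)) < 1 / N (mat_inv (blk (lead A (I ! k)) T T i i))"
        unfolding blkeq[OF i i] using c le by linarith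
    qed
    then show "block_col_dd N (lead A (I ! k)) T \<or> block_row_dd N (lead A (I ! k)) T" by simp
  qed
qed

end

theorem mainTheorem12:
  fixes N :: "'a::real_normed_field mat \<Rightarrow> real"
    and A :: "'a mat" and I :: "nat list" and n :: nat
  assumes "mat_norm_family N"
    and "dimension_invariant N"
    and "submultiplicative N"
    and "A \<in> carrier_mat n n"
    and "partition_of I n"
    and "block_col_dd N A I \<or> block_row_dd N A I"
  shows "block_strongly_nonsingular A I \<and> growth_factor N A I = 1"
proof -
  interpret nfam N using assms(1,3) by unfold_locales
  note A = assms(4) and I = assms(5)
  have dd: "ddx N A I" using assms(6) unfolding ddx_def .
  have bsn: "block_strongly_nonsingular A I"
    unfolding block_strongly_nonsingular_def
  proof
    fix k assume "k \<in> {1..nblocks I}"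
    then have k: "1 \<le> k" "k \<le> nblocks I" by auto
    note ld = lead_dd[OF A I dd k]
    show "invertible_mat (lead A (I ! k))" by (rule ddx_invertible[OF ld(1) ld(2) ld(3)])
  qed
  have lenI: "length I = Suc (nblocks I)" by (rule part_len[OF I])
  have nb1: "0 < nblocks I" using I unfolding partition_of_def nblocks_def by auto
  define f where "f k = block_sum_norm N (schur A I k) (shift_blocking I k)" for k
  have setq: "{block_sum_norm N (schur A I k) (shift_blocking I k) | k. k < nblocks I} = f ` {..<nblocks I}"
    unfolding f_def by auto
  have f0: "f 0 = block_sum_norm N A I"
    using schur_chain[OF A I dd nb1] part_0[OF I] unfolding f_def shift_blocking_def by simp
  have fle: "\<And>k. k < nblocks I \<Longrightarrow> f k \<le> block_sum_norm N A I"
    using schur_chain[OF A I dd] unfolding f_def by auto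
  have mx: "Max (f ` {..<nblocks I}) = block_sum_norm N A I"
  proof (rule Max_eqI)
    show "finite (f ` {..<nblocks I})" by simp
    show "\<And>y. y \<in> f ` {..<nblocks I} \<Longrightarrow> y \<le> block_sum_norm N A I" using fle by auto
    show "block_sum_norm N A I \<in> f ` {..<nblocks I}" using f0[symmetric] nb1 by auto
  qed
  have pos: "0 < block_sum_norm N A I"
  proof -
    have inv0: "invertible_mat (blk A I I 0 0)" using dd nb1 unfolding ddx_def block_col_dd_def block_row_dd_def
      by auto
    have q0: "0 < I ! Suc 0 - I ! 0" using part_lt[OF I, of 0 "Suc 0"] lenI nb1 by simp
    have p0: "0 < N (blk A I I 0 0)" by (rule N_invertible_pos[OF blk_carrier inv0 q0])
    have "N (blk A I I 0 0) \<le> (\<Sum>j < nblocks I. N (blk A I I 0 j))"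
      using nb1 by (intro member_le_sum N_nonneg) auto
    also have "\<dots> \<le> (\<Sum>i < nblocks I. \<Sum>j < nblocks I. N (blk A I I i j))"
      using nb1 by (intro member_le_sum[of 0 "{..<nblocks I}" "\<lambda>i. \<Sum>j < nblocks I. N (blk A I I i j)"]
        sum_nonneg N_nonneg) auto
    finally show ?thesis using p0 unfolding block_sum_norm_def by simp
  qed
  have "growth_factor N A I = 1"
    unfolding growth_factor_def setq mx using pos by simp
  with bsn show ?thesis by simp
qed


end
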